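(* Let $\mathscr A=\{0,1,2\}$, and let $\mu$ be the inhomogeneous multinomial measure on $\partial\mathscr A^\ast=\mathscr A^{\mathbb N}$ with parameters $a_1,a_2,a_3,b_1,b_2,b_3\in(0,1)$, $\sum a_i=\sum b_i=1$, and a sequence $(T_k)$ (integers, $T_1=1$, strictly increasing, $T_{k+1}/T_k\to\infty$). Fix $q\in\mathbb R$. Then there exist a Borel probability measure $\nu$ on $\partial\mathscr A^\ast$ and a strictly increasing sequence of integers $(n_k)_{k\ge1}$ such that (i) for every $n\ge1$ and every $w\in\mathscr A^n$, $\nu(w)\le\mu(w)^q\,3^{-n\underline\tau(q)}$; (ii) for every $\varepsilon>0$ there is $k_0$ such that for all $k\ge k_0$ and all $w\in\mathscr A^{n_k}$, $\nu(w)\le\mu(w)^q\,3^{-n_k(\tau(q)-\varepsilon)}$.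
   Context: The inhomogeneous multinomial measure: for $w=\varepsilon_1\cdots\varepsilon_n\in\mathscr A^n$, $\mu(w)=\mu([w])=\prod_{j=1}^np_j$, where $p_j=a_{\varepsilon_j+1}$ if $T_{2k-1}\le j<T_{2k}$ for some $k$, and $p_j=b_{\varepsilon_j+1}$ if $T_{2k}\le j<T_{2k+1}$ for some $k$; $[w]$ denotes the set of infinite words beginning with $w$, and $\nu(w)=\nu([w])$. Define $\tau_n(q)$ by $\sum_{w\in\mathscr A^n}\mu(w)^q=3^{n\tau_n(q)}$, and $\tau(q)=\limsup_{n\to\infty}\tau_n(q)$, $\underline\tau(q)=\liminf_{n\to\infty}\tau_n(q)$. *)

theory Defs
  imports "HOL-Probability.Probability"
begin

definition words :: "nat \<Rightarrow> nat list set" where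
  "words n = {w. length w = n \<and> set w \<subseteq> {0,1,2}}"

definition a_block :: "(nat \<Rightarrow> nat) \<Rightarrow> nat \<Rightarrow> bool" where
  "a_block T j \<longleftrightarrow> (\<exists>k\<ge>1. T (2*k - 1) \<le> j \<and> j < T (2*k))"

text \<open>Inhomogeneous multinomial measure of a cylinder; a, b indexed by 1,2,3.\<close>
definition mu :: "(nat \<Rightarrow> real) \<Rightarrow> (nat \<Rightarrow> real) \<Rightarrow> (nat \<Rightarrow> nat) \<Rightarrow> nat list \<Rightarrow> real" where
  "mu a b T w = (\<Prod>j\<in>{1..length w}.
      (if a_block T j then a (w ! (j - 1) + 1) else b (w ! (j - 1) + 1)))"

definition tau_n :: "(nat \<Rightarrow> real) \<Rightarrow> (nat \<Rightarrow> real) \<Rightarrow> (nat \<Rightarrow> nat) \<Rightarrow> real \<Rightarrow> nat \<Rightarrow> real" where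
  "tau_n a b T q n = log 3 (\<Sum>w\<in>words n. mu a b T w powr q) / real n"

definition tau_up :: "(nat \<Rightarrow> real) \<Rightarrow> (nat \<Rightarrow> real) \<Rightarrow> (nat \<Rightarrow> nat) \<Rightarrow> real \<Rightarrow> real" where
  "tau_up a b T q = real_of_ereal (limsup (\<lambda>n. ereal (tau_n a b T q n)))"

definition tau_low :: "(nat \<Rightarrow> real) \<Rightarrow> (nat \<Rightarrow> real) \<Rightarrow> (nat \<Rightarrow> nat) \<Rightarrow> real \<Rightarrow> real" where
  "tau_low a b T q = real_of_ereal (liminf (\<lambda>n. ereal (tau_n a b T q n)))"

text \<open>The symbolic space A^N with its product (= Borel) sigma-algebra, and cylinders.\<close>
definition seq_space :: "(nat \<Rightarrow> nat) measure" where
  "seq_space = PiM UNIV (\<lambda>_. count_space {0,1,2})"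

definition cyl :: "nat list \<Rightarrow> (nat \<Rightarrow> nat) set" where
  "cyl w = {x \<in> space seq_space. \<forall>i<length w. x i = w ! i}"

end

theory Submission
  imports Defs
begin

definition pj :: "(nat \<Rightarrow> real) \<Rightarrow> (nat \<Rightarrow> real) \<Rightarrow> (nat \<Rightarrow> nat) \<Rightarrow> nat \<Rightarrow> nat \<Rightarrow> real" where
  "pj a b T j x = (if a_block T j then a (x+1) else b (x+1))"

definition sj :: "(nat \<Rightarrow> real) \<Rightarrow> (nat \<Rightarrow> real) \<Rightarrow> (nat \<Rightarrow> nat) \<Rightarrow> real \<Rightarrow> nat \<Rightarrow> real" where
  "sj a b T q j = (\<Sum>x\<in>{0,1,2}. pj a b T j x powr q)"

lemma finite_words: "finite (words n)"
proof -
  have "words n = {xs. set xs \<subseteq> {0,1,2} \<and> length xs = n}" by (auto simp: words_def)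
  then show ?thesis using finite_lists_length_eq[of "{0::nat,1,2}" n] by simp
qed

lemma words_Suc: "words (Suc n) = (\<lambda>(w,x). w @ [x]) ` (words n \<times> {0,1,2})"
proof
  show "(\<lambda>(w,x). w @ [x]) ` (words n \<times> {0,1,2}) \<subseteq> words (Suc n)"
    by (auto simp: words_def)
next
  show "words (Suc n) \<subseteq> (\<lambda>(w,x). w @ [x]) ` (words n \<times> {0,1,2})"
  proof
    fix v assume v: "v \<in> words (Suc n)"
    then have "v \<noteq> []" by (auto simp: words_def)
    then obtain w x where vw: "v = w @ [x]" by (metis rev_exhaust)
    with v have "w \<in> words n" "x \<in> {0,1,2}" by (auto simp: words_def)
    with vw show "v \<in> (\<lambda>(w,x). w @ [x]) ` (words n \<times> {0,1,2})" by force
  qed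
qed

lemma mu_eq: "mu a b T w = (\<Prod>j\<in>{1..length w}. pj a b T j (w ! (j - 1)))"
  unfolding mu_def pj_def by (rule refl)

lemma powr_mult': "((x::real) * y) powr r = x powr r * y powr r"
  using prod_powr_distrib[of "\<lambda>i. if i = (0::nat) then x else y" "{0,1}" r] by simp

lemma mu_snoc: "mu a b T (w @ [x]) = mu a b T w * pj a b T (Suc (length w)) x"
proof -
  have "mu a b T (w @ [x]) = (\<Prod>j\<in>{1..Suc (length w)}. pj a b T j ((w@[x]) ! (j - 1)))"
    by (simp add: mu_eq)
  also have "\<dots> = (\<Prod>j\<in>{1..length w}. pj a b T j ((w@[x]) ! (j - 1))) * pj a b T (Suc (length w)) x"
    by (simp add: prod.cl_ivl_Suc nth_append)
  also have "(\<Prod>j\<in>{1..length w}. pj a b T j ((w@[x]) ! (j - 1))) = mu a b T w"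
    unfolding mu_eq by (rule prod.cong) (auto simp: nth_append)
  finally show ?thesis .
qed

lemma sum_words:
  "(\<Sum>w\<in>words n. mu a b T w powr q) = (\<Prod>j\<in>{1..n}. sj a b T q j)"
proof (induction n)
  case 0
  have "words 0 = {[]}" by (auto simp: words_def)
  then show ?case by (simp add: mu_def)
next
  case (Suc n)
  have inj: "inj_on (\<lambda>(w,x). w @ [x]) (words n \<times> {0,1,2})"
    by (auto simp: inj_on_def)
  have "(\<Sum>w\<in>words (Suc n). mu a b T w powr q)
      = (\<Sum>(w,x)\<in>words n \<times> {0,1,2}. mu a b T (w @ [x]) powr q)"
    unfolding words_Suc by (subst sum.reindex[OF inj]) (simp add: case_prod_unfold)
  also have "\<dots> = (\<Sum>w\<in>words n. \<Sum>x\<in>{0,1,2}. mu a b T w powr q * pj a b T (Suc n) x powr q)"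
    unfolding sum.cartesian_product[symmetric]
    by (intro sum.cong refl) (auto simp: mu_snoc words_def powr_mult')
  also have "\<dots> = (\<Sum>w\<in>words n. mu a b T w powr q) * sj a b T q (Suc n)"
    unfolding sj_def sum_product by (rule refl)
  finally show ?case using Suc by (simp add: prod.cl_ivl_Suc)
qed

definition nuM :: "(nat \<Rightarrow> real) \<Rightarrow> (nat \<Rightarrow> real) \<Rightarrow> (nat \<Rightarrow> nat) \<Rightarrow> real \<Rightarrow> nat \<Rightarrow> nat measure" where
  "nuM a b T q i = point_measure {0,1,2} (\<lambda>x. ennreal (pj a b T (Suc i) x powr q / sj a b T q (Suc i)))"

definition nu :: "(nat \<Rightarrow> real) \<Rightarrow> (nat \<Rightarrow> real) \<Rightarrow> (nat \<Rightarrow> nat) \<Rightarrow> real \<Rightarrow> (nat \<Rightarrow> nat) measure" where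
  "nu a b T q = PiM UNIV (nuM a b T q)"

locale posp =
  fixes a b :: "nat \<Rightarrow> real" and T :: "nat \<Rightarrow> nat" and q :: real
  assumes pos: "\<And>j x. x \<in> {0,1,2} \<Longrightarrow> pj a b T j x > 0"
begin

lemma sj_pos: "sj a b T q j > 0"
  unfolding sj_def using pos[of 0 j] pos[of 1 j] pos[of 2 j] by (simp add: add_pos_pos)

lemma prob_nuM: "prob_space (nuM a b T q i)"
proof (rule prob_spaceI)
  have "emeasure (nuM a b T q i) (space (nuM a b T q i))
     = (\<Sum>x\<in>{0,1,2}. ennreal (pj a b T (Suc i) x powr q / sj a b T q (Suc i)))"
    unfolding nuM_def by (simp add: emeasure_point_measure_finite space_point_measure del: sum.insert)
  also have "\<dots> = ennreal (\<Sum>x\<in>{0,1,2}. pj a b T (Suc i) x powr q / sj a b T q (Suc i))"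
    by (rule sum_ennreal) (use sj_pos[of "Suc i"] in simp)
  also have "(\<Sum>x\<in>{0,1,2}. pj a b T (Suc i) x powr q / sj a b T q (Suc i)) = 1"
    using sj_pos[of "Suc i"] unfolding sum_divide_distrib[symmetric] by (simp add: sj_def)
  finally show "emeasure (nuM a b T q i) (space (nuM a b T q i)) = 1" by simp
qed

lemma prob_nu: "prob_space (nu a b T q)"
  unfolding nu_def by (rule prob_space_PiM) (rule prob_nuM)

lemma sets_nu: "sets (nu a b T q) = sets seq_space"
  unfolding nu_def seq_space_def by (rule sets_PiM_cong) (auto simp: nuM_def sets_point_measure)

lemma measure_cyl:
  assumes w: "w \<in> words n"
  shows "measure (nu a b T q) (cyl w) = mu a b T w powr q / (\<Prod>j\<in>{1..n}. sj a b T q j)"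
proof -
  interpret PP: product_prob_space "nuM a b T q" UNIV
    unfolding product_prob_space_def product_prob_space_axioms_def product_sigma_finite_def
    using prob_nuM prob_space_imp_sigma_finite by blast
  have len: "length w = n" and sw: "set w \<subseteq> {0,1,2}" using w by (auto simp: words_def)
  have wi: "i < n \<Longrightarrow> w ! i \<in> {0,1,2}" for i using sw len nth_mem by blast
  have sp: "space (nu a b T q) = space seq_space"
    unfolding nu_def seq_space_def by (simp add: space_PiM nuM_def space_point_measure)
  have cyl: "cyl w = prod_emb UNIV (nuM a b T q) {..<n} (PiE {..<n} (\<lambda>i. {w ! i}))"
    using len unfolding cyl_def prod_emb_def
    by (auto simp: PiE_iff seq_space_def space_PiM nuM_def space_point_measure; metis less_numeral_extra(3))
  have "measure (nu a b T q) (cyl w) = (\<Prod>i<n. measure (nuM a b T q i) {w ! i})"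
    unfolding cyl nu_def
    by (rule PP.measure_PiM_emb) (use wi in \<open>auto simp: nuM_def sets_point_measure\<close>)
  also have "\<dots> = (\<Prod>i<n. pj a b T (Suc i) (w ! i) powr q / sj a b T q (Suc i))"
  proof (rule prod.cong[OF refl])
    fix i assume "i \<in> {..<n}"
    then have "w ! i \<in> {0,1,2}" using wi by auto
    then show "measure (nuM a b T q i) {w ! i} = pj a b T (Suc i) (w ! i) powr q / sj a b T q (Suc i)"
      unfolding nuM_def measure_def using sj_pos[of "Suc i"]
      by (subst emeasure_point_measure_finite) auto
  qed
  also have "\<dots> = (\<Prod>i<n. pj a b T (Suc i) (w ! i) powr q) / (\<Prod>i<n. sj a b T q (Suc i))"
    by (rule prod_dividef)
  also have "(\<Prod>i<n. pj a b T (Suc i) (w ! i) powr q) = mu a b T w powr q"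
    unfolding mu_eq prod_powr_distrib len
    using prod.atLeast1_atMost_eq[of "\<lambda>i. pj a b T i (w ! (i - 1)) powr q" n] by simp
  also have "(\<Prod>i<n. sj a b T q (Suc i)) = (\<Prod>j\<in>{1..n}. sj a b T q j)"
    using prod.atLeast1_atMost_eq[of "sj a b T q" n] by simp
  finally show ?thesis .
qed
end

lemma T_le:
  assumes T_mono: "\<forall>k\<ge>1. T k < T (Suc k)"
  shows "1 \<le> k \<Longrightarrow> k \<le> l \<Longrightarrow> T k \<le> (T l :: nat)"
proof (induction l)
  case 0 then show ?case by simp
next
  case (Suc l)
  show ?case
  proof (cases "k = Suc l")
    case False
    then have "k \<le> l" using Suc by simp
    then show ?thesis using Suc T_mono by (metis le_less_trans less_imp_le_nat order_trans)
  qed simp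
qed

lemma T_less:
  assumes T_mono: "\<forall>k\<ge>1. T k < T (Suc k)"
  shows "1 \<le> k \<Longrightarrow> k < l \<Longrightarrow> T k < (T l :: nat)"
proof -
  assume "1 \<le> k" "k < l"
  then have "T k < T (Suc k)" "T (Suc k) \<le> T l" using T_mono T_le[OF T_mono, of "Suc k" l] by auto
  then show ?thesis by simp
qed

lemma block:
  assumes T_mono: "\<forall>k\<ge>1. T k < T (Suc k)"
    and m: "1 \<le> m" "T m \<le> j" "j < T (Suc m)"
  shows "a_block T j \<longleftrightarrow> odd m"
proof
  assume "odd m"
  then obtain k where k: "m = 2*k + 1" by (metis oddE)
  show "a_block T j" unfolding a_block_def
    by (rule exI[of _ "Suc k"]) (use m k in auto)
next
  assume "a_block T j"
  then obtain k where k: "k \<ge> 1" "T (2*k - 1) \<le> j" "j < T (2*k)" unfolding a_block_def by blast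
  show "odd m"
  proof (rule ccontr)
    assume ev: "\<not> odd m"
    have "2*k \<le> m \<or> Suc m \<le> 2*k - 1" using ev k(1) by presburger
    then show False
    proof
      assume "2*k \<le> m"
      then have "T (2*k) \<le> T m" using T_le[OF T_mono] k(1) by simp
      then show False using k m by simp
    next
      assume "Suc m \<le> 2*k - 1"
      then have "T (Suc m) \<le> T (2*k - 1)" using T_le[OF T_mono] m by simp
      then show False using k m by simp
    qed
  qed
qed


theorem lemma6:
  fixes a b :: "nat \<Rightarrow> real" and T :: "nat \<Rightarrow> nat" and q :: real
  assumes a_pos: "\<forall>i\<in>{1,2,3}. 0 < a i \<and> a i < 1"
    and b_pos: "\<forall>i\<in>{1,2,3}. 0 < b i \<and> b i < 1"
    and a_sum: "a 1 + a 2 + a 3 = 1"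
    and b_sum: "b 1 + b 2 + b 3 = 1"
    and T1: "T 1 = 1"
    and T_mono: "\<forall>k\<ge>1. T k < T (Suc k)"
    and T_ratio: "filterlim (\<lambda>k. real (T (Suc k)) / real (T k)) at_top sequentially"
  shows "\<exists>(\<nu> :: (nat \<Rightarrow> nat) measure) (n :: nat \<Rightarrow> nat).
           prob_space \<nu> \<and> sets \<nu> = sets seq_space \<and> strict_mono n \<and>
           (\<forall>m\<ge>1. \<forall>w\<in>words m.
              measure \<nu> (cyl w) \<le> mu a b T w powr q * 3 powr (- (real m * tau_low a b T q))) \<and>
           (\<forall>\<epsilon>>0. \<exists>k0. \<forall>k\<ge>k0. \<forall>w\<in>words (n k).
              measure \<nu> (cyl w) \<le> mu a b T w powr q * 3 powr (- (real (n k) * (tau_up a b T q - \<epsilon>))))"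
proof -
  interpret posp a b T q
  proof
    fix j x :: nat assume "x \<in> {0,1,2}"
    then have "x + 1 \<in> {1,2,3}" by auto
    then show "pj a b T j x > 0" using a_pos b_pos unfolding pj_def by (auto simp: eval_nat_numeral)
  qed
  define SA where "SA = (\<Sum>x\<in>{0::nat,1,2}. a (x+1) powr q)"
  define SB where "SB = (\<Sum>x\<in>{0::nat,1,2}. b (x+1) powr q)"
  define \<alpha> where "\<alpha> = log 3 SA"
  define \<beta> where "\<beta> = log 3 SB"
  define m0 where "m0 = min \<alpha> \<beta>"
  define M where "M = max \<alpha> \<beta>"
  define L where "L = (\<lambda>j. log 3 (sj a b T q j))"
  define \<tau> where "\<tau> = tau_n a b T q"
  define S where "S = (\<lambda>n. \<Sum>j\<in>{1..n}. L j)"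
  have Lab: "L j = (if a_block T j then \<alpha> else \<beta>)" for j
    unfolding L_def \<alpha>_def \<beta>_def SA_def SB_def sj_def pj_def by simp
  have Lb: "m0 \<le> L j" "L j \<le> M" for j unfolding Lab m0_def M_def by auto
  have Zeq: "(\<Prod>j\<in>{1..n}. sj a b T q j) = 3 powr S n" for n
    unfolding S_def L_def by (subst powr_sum) (auto intro!: prod.cong simp: sj_pos)
  have tau_eq: "\<tau> n = S n / real n" for n
    unfolding \<tau>_def tau_n_def sum_words Zeq by simp
  have Sn: "n \<ge> 1 \<Longrightarrow> S n = real n * \<tau> n" for n unfolding tau_eq by simp
  have Slow: "real n * m0 \<le> S n" for n
    unfolding S_def using sum_bounded_below[of "{1..n}" m0 L] Lb by (simp add: mult.commute)
  have Sup: "S n \<le> real n * M" for n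
    unfolding S_def using sum_bounded_above[of "{1..n}" L M] Lb by (simp add: mult.commute)
  have tau_low_n: "n \<ge> 1 \<Longrightarrow> m0 \<le> \<tau> n" for n
    using Slow[of n] unfolding tau_eq by (simp add: field_simps)
  have tau_up_n: "n \<ge> 1 \<Longrightarrow> \<tau> n \<le> M" for n
    using Sup[of n] unfolding tau_eq by (simp add: field_simps)
  have mM: "m0 \<le> M" unfolding m0_def M_def by simp
  have Tpos: "k \<ge> 1 \<Longrightarrow> T k \<ge> 1" for k using T_le[OF T_mono, of 1 k] T1 by simp
  have est: "\<tau> (T (Suc m) - 1) \<le> (if odd m then \<alpha> else \<beta>) + 2 * (M - m0) * (real (T m) / real (T (Suc m)))"
    if m: "m \<ge> 1" for m
  proof -
    define n where "n = T (Suc m) - 1"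
    define c where "c = (if odd m then \<alpha> else \<beta>)"
    have Tm: "T m \<ge> 1" "T m < T (Suc m)" using Tpos m T_mono by auto
    then have n1: "n \<ge> 1" and nT: "real (T (Suc m)) \<le> 2 * real n" unfolding n_def by auto
    have split: "{1..n} = {1..<T m} \<union> {T m..n}" using Tm unfolding n_def by auto
    have "(\<Sum>j\<in>{1..n}. L j - c) = (\<Sum>j\<in>{1..<T m}. L j - c) + (\<Sum>j\<in>{T m..n}. L j - c)"
      unfolding split by (rule sum.union_disjoint) auto
    also have "(\<Sum>j\<in>{T m..n}. L j - c) = 0"
    proof (rule sum.neutral, rule ballI)
      fix j assume "j \<in> {T m..n}"
      then have "T m \<le> j" "j < T (Suc m)" unfolding n_def using Tm by auto
      then have "a_block T j \<longleftrightarrow> odd m" using block[OF T_mono m] by simp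
      then show "L j - c = 0" unfolding Lab c_def by simp
    qed
    also have "(\<Sum>j\<in>{1..<T m}. L j - c) \<le> real (card {1..<T m}) * (M - m0)"
    proof -
      have "m0 \<le> c" unfolding c_def m0_def by auto
      then have "\<And>j. L j - c \<le> M - m0" using Lb by (smt (verit))
      then show ?thesis using sum_bounded_above[of "{1..<T m}" "\<lambda>j. L j - c" "M - m0"] by simp
    qed
    also have "\<dots> \<le> real (T m) * (M - m0)"
      using mM by (intro mult_right_mono) auto
    finally have "S n - real n * c \<le> real (T m) * (M - m0)"
      unfolding S_def by (simp add: sum_subtractf)
    then have "\<tau> n - c \<le> real (T m) * (M - m0) / real n"
      using n1 Sn[OF n1] by (simp add: field_simps)
    also have "\<dots> \<le> 2 * (M - m0) * (real (T m) / real (T (Suc m)))"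
    proof -
      have X: "0 \<le> real (T m) * (M - m0)" using mM by simp
      have "real (T m) * (M - m0) / real n \<le> real (T m) * (M - m0) / (real (T (Suc m)) / 2)"
        by (rule divide_left_mono[OF _ X]) (use nT n1 Tm in auto)
      also have "\<dots> = 2 * (M - m0) * (real (T m) / real (T (Suc m)))" by simp
      finally show ?thesis .
    qed
    finally show ?thesis unfolding n_def c_def by simp
  qed
  define mk where "mk = (\<lambda>k::nat. if \<alpha> \<le> \<beta> then 2*k+1 else 2*k+2)"
  define r where "r = (\<lambda>k. T (Suc (mk k)) - 1)"
  have mk1: "mk k \<ge> 1" for k unfolding mk_def by auto
  have mkc: "(if odd (mk k) then \<alpha> else \<beta>) = m0" for k unfolding mk_def m0_def by auto
  have mk_mono: "strict_mono mk" unfolding mk_def strict_mono_def by auto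
  have r_mono: "strict_mono r"
  proof (rule strict_monoI_Suc)
    fix k
    have "T (Suc (mk k)) < T (Suc (mk (Suc k)))"
      using T_less[OF T_mono, of "Suc (mk k)" "Suc (mk (Suc k))"] mk_mono by (simp add: strict_mono_def)
    moreover have "T (Suc (mk k)) \<ge> 1" using Tpos by simp
    ultimately show "r k < r (Suc k)" unfolding r_def by simp
  qed
  have r1: "r k \<ge> 1" for k
    using Tpos[of "mk k"] mk1[of k] T_mono unfolding r_def by fastforce
  have g0: "(\<lambda>k. real (T (mk k)) / real (T (Suc (mk k)))) \<longlonglongrightarrow> 0"
  proof -
    have "filterlim (\<lambda>k. real (T (Suc (mk k))) / real (T (mk k))) at_top sequentially"
      using filterlim_compose[OF T_ratio filterlim_subseq[OF mk_mono]] by (simp add: o_def)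
    from tendsto_inverse_0_at_top[OF this] show ?thesis by simp
  qed
  have tr: "(\<lambda>k. \<tau> (r k)) \<longlonglongrightarrow> m0"
  proof (rule tendsto_sandwich[of "\<lambda>k. m0" _ _ "\<lambda>k. m0 + 2 * (M - m0) * (real (T (mk k)) / real (T (Suc (mk k))))"])
    show "\<forall>\<^sub>F k in sequentially. m0 \<le> \<tau> (r k)" using tau_low_n r1 by auto
    show "\<forall>\<^sub>F k in sequentially. \<tau> (r k) \<le> m0 + 2 * (M - m0) * (real (T (mk k)) / real (T (Suc (mk k))))"
      using est[OF mk1] mkc unfolding r_def by auto
    show "(\<lambda>k. m0 + 2 * (M - m0) * (real (T (mk k)) / real (T (Suc (mk k))))) \<longlonglongrightarrow> m0"
      using tendsto_add[OF tendsto_const[of m0] tendsto_mult[OF tendsto_const[of "2 * (M - m0)"] g0]] by simp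
  qed simp
  have liminf_eq: "liminf (\<lambda>n. ereal (\<tau> n)) = ereal m0"
  proof (rule antisym)
    have "liminf (\<lambda>n. ereal (\<tau> n)) \<le> liminf ((\<lambda>n. ereal (\<tau> n)) \<circ> r)"
      by (rule liminf_subseq_mono[OF r_mono])
    also have "liminf ((\<lambda>n. ereal (\<tau> n)) \<circ> r) = ereal m0"
      by (rule lim_imp_Liminf) (use tr in \<open>auto simp: o_def\<close>)
    finally show "liminf (\<lambda>n. ereal (\<tau> n)) \<le> ereal m0" .
    show "ereal m0 \<le> liminf (\<lambda>n. ereal (\<tau> n))"
      by (rule Liminf_bounded) (use tau_low_n in \<open>auto simp: eventually_sequentially intro!: exI[of _ 1]\<close>)
  qed
  have tlow: "tau_low a b T q = m0" unfolding tau_low_def \<tau>_def[symmetric] liminf_eq by simp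
  have ev1: "\<forall>\<^sub>F n in sequentially. n \<ge> (1::nat)" unfolding eventually_sequentially by blast
  have ls_up: "limsup (\<lambda>n. ereal (\<tau> n)) \<le> ereal M"
    by (rule Limsup_bounded) (use eventually_mono[OF ev1 tau_up_n] in simp)
  have ls_low: "ereal m0 \<le> limsup (\<lambda>n. ereal (\<tau> n))"
    using Liminf_le_Limsup[of sequentially "\<lambda>n. ereal (\<tau> n)"] liminf_eq by simp
  have ls_eq: "limsup (\<lambda>n. ereal (\<tau> n)) = ereal (tau_up a b T q)"
    unfolding tau_up_def \<tau>_def[symmetric] using ls_up ls_low
    by (cases "limsup (\<lambda>n. ereal (\<tau> n))") auto
  obtain r2 where r2: "strict_mono r2" "((\<lambda>n. ereal (\<tau> n)) \<circ> r2) \<longlonglongrightarrow> limsup (\<lambda>n. ereal (\<tau> n))"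
    using limsup_subseq_lim by blast
  have tr2: "(\<lambda>k. \<tau> (r2 k)) \<longlonglongrightarrow> tau_up a b T q"
    using r2(2) unfolding ls_eq by (simp add: o_def)
  let ?\<nu> = "nu a b T q"
  have cyl_le: "measure ?\<nu> (cyl w) \<le> mu a b T w powr q * 3 powr (- x)"
    if w: "w \<in> words m" and xS: "x \<le> S m" for w m x
  proof -
    have "measure ?\<nu> (cyl w) = mu a b T w powr q / 3 powr S m"
      using measure_cyl[OF w] Zeq by simp
    also have "\<dots> \<le> mu a b T w powr q / 3 powr x"
      by (rule divide_left_mono) (use xS in auto)
    also have "\<dots> = mu a b T w powr q * 3 powr (- x)" by (simp add: powr_minus divide_inverse)
    finally show ?thesis .
  qed
  show ?thesis
  proof (intro exI conjI)
    show "prob_space ?\<nu>" by (rule prob_nu)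
    show "sets ?\<nu> = sets seq_space" by (rule sets_nu)
    show "strict_mono r2" by (rule r2(1))
    show "\<forall>m\<ge>1. \<forall>w\<in>words m. measure ?\<nu> (cyl w) \<le> mu a b T w powr q * 3 powr (- (real m * tau_low a b T q))"
    proof (intro allI impI ballI)
      fix m w assume "m \<ge> (1::nat)" "w \<in> words m"
      then show "measure ?\<nu> (cyl w) \<le> mu a b T w powr q * 3 powr (- (real m * tau_low a b T q))"
        using cyl_le[of w m "real m * tau_low a b T q"] Slow[of m] unfolding tlow by simp
    qed
    show "\<forall>\<epsilon>>0. \<exists>k0. \<forall>k\<ge>k0. \<forall>w\<in>words (r2 k).
              measure ?\<nu> (cyl w) \<le> mu a b T w powr q * 3 powr (- (real (r2 k) * (tau_up a b T q - \<epsilon>)))"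
    proof (intro allI impI)
    fix \<epsilon> :: real assume \<epsilon>: "\<epsilon> > 0"
    have "\<forall>\<^sub>F k in sequentially. tau_up a b T q - \<epsilon> < \<tau> (r2 k)"
      using order_tendstoD(1)[OF tr2, of "tau_up a b T q - \<epsilon>"] \<epsilon> by simp
    then obtain N where N: "\<And>k. k \<ge> N \<Longrightarrow> tau_up a b T q - \<epsilon> < \<tau> (r2 k)"
      unfolding eventually_sequentially by blast
    show "\<exists>k0. \<forall>k\<ge>k0. \<forall>w\<in>words (r2 k).
              measure ?\<nu> (cyl w) \<le> mu a b T w powr q * 3 powr (- (real (r2 k) * (tau_up a b T q - \<epsilon>)))"
    proof (intro exI[of _ "max N 1"] allI impI ballI)
      fix k w assume k: "max N 1 \<le> k" and w: "w \<in> words (r2 k)"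
      have "r2 k \<ge> 1" using k seq_suble[OF r2(1), of k] by simp
      then have "S (r2 k) = real (r2 k) * \<tau> (r2 k)" by (rule Sn)
      moreover have "real (r2 k) * (tau_up a b T q - \<epsilon>) \<le> real (r2 k) * \<tau> (r2 k)"
        using N[of k] k by (intro mult_left_mono) auto
      ultimately show "measure ?\<nu> (cyl w) \<le> mu a b T w powr q * 3 powr (- (real (r2 k) * (tau_up a b T q - \<epsilon>)))"
        using cyl_le[OF w] by simp
    qed
    qed
  qed
qed
end
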